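(* Let $W$ be an eventually periodic subset of $\mathbb{Z}^d$ with periods $u_1,\dots,u_d$, and let $\mathscr{W}_1,\mathcal{W}$ be as defined in the context. Suppose $\mathscr{W}_1$ is nonempty. Then $W$ has a minimal complement in $\mathbb{Z}^d$ if either of the following holds: (1) $\pi(\mathcal{W}\cup\mathscr{W}_1)$ is a translate of a subgroup of $\mathbb{Z}^d/\mathcal{L}$; (2) every nontrivial element of $\mathbb{Z}^d/\mathcal{L}$ has order two, and either (a) each of $\pi(\mathscr{W}_1),\pi(\mathcal{W})$ is a singleton, or (b) the complement of $\pi(\mathscr{W}_1\cup\mathcal{W})$ in $\mathbb{Z}^d/\mathcal{L}$ is a singleton.
   Context: $d\geqslant1$, $\mathbb{N}=\{0,1,2,\dots\}$. Let $u_1,\dots,u_d\in\mathbb{Z}^d$ satisfy no nontrivial $\mathbb{Z}$-linear relation, $\mathcal{L}=\mathbb{Z}u_1+\dots+\mathbb{Z}u_d$, $P=\mathbb{N}u_1+\dots+\mathbb{N}u_d$, $\pi:\mathbb{Z}^d\to\mathbb{Z}^d/\mathcal{L}$ the quotient map. A nonempty $X\subseteq\mathbb{Z}^d$ is eventually periodic with periods $u_1,\dots,u_d$ if $X\subseteq F+P$ for some nonempty finite $F\subseteq\mathbb{Z}^d$ and $x+P\subseteq X$ for all but finitely many $x\in X$. For such $W$: $\mathscr{W}=\{w\in W:w+P\not\subseteq W\}$; $\mathcal{W}=\{w\in W\setminus\mathscr{W}:(w-P)\cap(W\setminus\mathscr{W})=\{w\}\}$; $\mathscr{W}_1$ is the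 set of elements of $\mathscr{W}$ congruent modulo $\mathcal{L}$ to no element of $\mathcal{W}$. A nonempty $M\subseteq\mathbb{Z}^d$ is a complement of $W$ if $M+W=\mathbb{Z}^d$, and a minimal complement if no proper subset of $M$ is a complement of $W$. *)

theory Defs
  imports "HOL-Analysis.Analysis" "HOL-Algebra.Algebra"
begin

text \<open>Z^d is modelled as int ^ 'n, with d = CARD('n).\<close>

definition lin_indep_Z :: "('n::finite \<Rightarrow> int ^ 'n) \<Rightarrow> bool" where
  "lin_indep_Z u \<longleftrightarrow> (\<forall>c::'n \<Rightarrow> int. (\<Sum>i\<in>UNIV. c i *s u i) = 0 \<longrightarrow> (\<forall>i. c i = 0))"

definition latt :: "('n::finite \<Rightarrow> int ^ 'n) \<Rightarrow> (int ^ 'n) set" where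
  "latt u = {(\<Sum>i\<in>UNIV. c i *s u i) | c::'n \<Rightarrow> int. True}"

definition pcone :: "('n::finite \<Rightarrow> int ^ 'n) \<Rightarrow> (int ^ 'n) set" where
  "pcone u = {(\<Sum>i\<in>UNIV. c i *s u i) | c::'n \<Rightarrow> int. \<forall>i. 0 \<le> c i}"

definition eventually_periodic :: "('n::finite \<Rightarrow> int ^ 'n) \<Rightarrow> (int ^ 'n) set \<Rightarrow> bool" where
  "eventually_periodic u S \<longleftrightarrow> S \<noteq> {} \<and>
     (\<exists>F. finite F \<and> F \<noteq> {} \<and> S \<subseteq> {f + p | f p. f \<in> F \<and> p \<in> pcone u}) \<and>
     finite {x \<in> S. \<not> ((\<lambda>p. x + p) ` pcone u \<subseteq> S)}"

definition scrW :: "('n::finite \<Rightarrow> int ^ 'n) \<Rightarrow> (int ^ 'n) set \<Rightarrow> (int ^ 'n) set" where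
  "scrW u W = {w \<in> W. \<not> ((\<lambda>p. w + p) ` pcone u \<subseteq> W)}"

definition calW :: "('n::finite \<Rightarrow> int ^ 'n) \<Rightarrow> (int ^ 'n) set \<Rightarrow> (int ^ 'n) set" where
  "calW u W = {w \<in> W - scrW u W. (\<lambda>p. w - p) ` pcone u \<inter> (W - scrW u W) = {w}}"

definition scrW1 :: "('n::finite \<Rightarrow> int ^ 'n) \<Rightarrow> (int ^ 'n) set \<Rightarrow> (int ^ 'n) set" where
  "scrW1 u W = {w \<in> scrW u W. \<not> (\<exists>v \<in> calW u W. w - v \<in> latt u)}"

definition is_complement :: "(int ^ 'n) set \<Rightarrow> (int ^ 'n) set \<Rightarrow> bool" where
  "is_complement M W \<longleftrightarrow> M \<noteq> {} \<and> {m + w | m w. m \<in> M \<and> w \<in> W} = UNIV"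

definition is_minimal_complement :: "(int ^ 'n) set \<Rightarrow> (int ^ 'n) set \<Rightarrow> bool" where
  "is_minimal_complement M W \<longleftrightarrow> is_complement M W \<and> (\<forall>M'. M' \<subset> M \<longrightarrow> \<not> is_complement M' W)"

definition Zgrp :: "(int ^ 'n) monoid" where
  "Zgrp = \<lparr>carrier = UNIV, monoid.mult = (+), one = 0\<rparr>"

definition Qgrp :: "('n::finite \<Rightarrow> int ^ 'n) \<Rightarrow> (int ^ 'n) set monoid" where
  "Qgrp u = Zgrp Mod latt u"

definition qmap :: "('n::finite \<Rightarrow> int ^ 'n) \<Rightarrow> int ^ 'n \<Rightarrow> (int ^ 'n) set" where
  "qmap u x = latt u #>\<^bsub>Zgrp\<^esub> x"

end

theory Submission
  imports Defs
begin


definition lc :: "('n::finite \<Rightarrow> int ^ 'n) \<Rightarrow> ('n \<Rightarrow> int) \<Rightarrow> int ^ 'n" where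
  "lc u c = (\<Sum>i\<in>UNIV. c i *s u i)"

lemma lc_add: "lc u (\<lambda>i. a i + b i) = lc u a + lc u b"
  by (simp add: lc_def vector_sadd_rdistrib sum.distrib)
lemma lc_diff: "lc u (\<lambda>i. a i - b i) = lc u a - lc u b"
  by (simp add: lc_def vector_sub_rdistrib sum_subtractf)
lemma lc_zero: "lc u (\<lambda>i. 0) = 0"
  by (simp add: lc_def)

lemma latt_lc: "latt u = range (lc u)"
  by (auto simp: latt_def lc_def)
lemma pcone_lc: "pcone u = {lc u c | c. \<forall>i. 0 \<le> c i}"
  by (auto simp: pcone_def lc_def)

lemma latt_0: "0 \<in> latt u"
  unfolding latt_lc using lc_zero[of u, symmetric] by auto
lemma latt_add: "x \<in> latt u \<Longrightarrow> y \<in> latt u \<Longrightarrow> x + y \<in> latt u"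
proof -
  assume "x \<in> latt u" "y \<in> latt u"
  then obtain a b where "x = lc u a" "y = lc u b" unfolding latt_lc by auto
  then have "x + y = lc u (\<lambda>i. a i + b i)" by (simp add: lc_add)
  then show ?thesis unfolding latt_lc by auto
qed
lemma latt_diff: "x \<in> latt u \<Longrightarrow> y \<in> latt u \<Longrightarrow> x - y \<in> latt u"
proof -
  assume "x \<in> latt u" "y \<in> latt u"
  then obtain a b where "x = lc u a" "y = lc u b" unfolding latt_lc by auto
  then have "x - y = lc u (\<lambda>i. a i - b i)" by (simp add: lc_diff)
  then show ?thesis unfolding latt_lc by auto
qed
lemma latt_neg: "x \<in> latt u \<Longrightarrow> - x \<in> latt u"
proof -
  assume "x \<in> latt u"
  then have "0 - x \<in> latt u" by (rule latt_diff[OF latt_0])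
  then show ?thesis by simp
qed
lemma pcone_0: "0 \<in> pcone u"
  unfolding pcone_lc using lc_zero by fastforce
lemma pcone_add: "x \<in> pcone u \<Longrightarrow> y \<in> pcone u \<Longrightarrow> x + y \<in> pcone u"
  unfolding pcone_lc
proof clarify
  fix a b assume "\<forall>i. 0 \<le> (a::'a\<Rightarrow>int) i" "\<forall>i. 0 \<le> (b::'a\<Rightarrow>int) i"
  then show "\<exists>c. lc u a + lc u b = lc u c \<and> (\<forall>i. 0 \<le> c i)"
    by (intro exI[of _ "\<lambda>i. a i + b i"]) (simp add: lc_add)
qed
lemma pcone_latt: "pcone u \<subseteq> latt u"
  unfolding pcone_lc latt_lc by auto

lemma lc_inj: assumes "lin_indep_Z u" "lc u a = lc u b" shows "a = b"
proof -
  have h: "lc u (\<lambda>i. a i - b i) = 0" using assms(2) by (simp add: lc_diff)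
  from assms(1) have "(\<Sum>i\<in>UNIV. (\<lambda>i. a i - b i) i *s u i) = 0 \<longrightarrow> (\<forall>i. (\<lambda>i. a i - b i) i = 0)"
    unfolding lin_indep_Z_def by (rule spec)
  then have "\<forall>i. a i - b i = 0" using h unfolding lc_def by simp
  then show ?thesis by (simp add: fun_eq_iff)
qed

lemma pcone_sum_zero:
  assumes "lin_indep_Z u" "\<forall>i. 0 \<le> (c::'n::finite\<Rightarrow>int) i" "sum c UNIV \<le> 0"
  shows "lc u c = 0"
proof -
  have "0 \<le> sum c UNIV" using assms(2) by (simp add: sum_nonneg)
  then have "sum c UNIV = 0" using assms(3) by linarith
  then have "\<forall>i\<in>UNIV. c i = 0" using sum_nonneg_eq_0_iff[of UNIV c] assms(2) by simp
  then have "c = (\<lambda>i. 0)" by auto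
  then show ?thesis by (simp add: lc_zero)
qed



lemma min_calW:
  fixes u :: "'n::finite \<Rightarrow> int ^ 'n"
  assumes indep: "lin_indep_Z u" and evp: "eventually_periodic u W"
    and w: "w \<in> W" "w \<notin> scrW u W"
  shows "\<exists>c \<in> calW u W. w - c \<in> pcone u"
proof -
  obtain F where F: "finite F" "F \<noteq> {}" "W \<subseteq> {f + p | f p. f \<in> F \<and> p \<in> pcone u}"
    using conjunct1[OF conjunct2[OF evp[unfolded eventually_periodic_def]]] by blast
  define W' where "W' = W - scrW u W"
  define S where "S = {sum c UNIV | c x. x \<in> W' \<and> (\<forall>i. 0 \<le> c i) \<and> w - x = lc u c}"
  define B where "B = (\<lambda>f. sum (THE e. w - f = lc u e) UNIV) ` F"
  have finB: "finite B" using F(1) by (simp add: B_def)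
  have bnd: "s \<le> Max B" if "s \<in> S" for s
  proof -
    obtain c x where cx: "s = sum c UNIV" "x \<in> W'" "\<forall>i. 0 \<le> c i" "w - x = lc u c"
      using \<open>s \<in> S\<close> unfolding S_def by blast
    then have "x \<in> W" unfolding W'_def by blast
    then obtain f p where fp: "f \<in> F" "p \<in> pcone u" "x = f + p" using F(3) by blast
    then obtain c' where c': "p = lc u c'" "\<forall>i. 0 \<le> c' i" unfolding pcone_lc by blast
    have "w - f = lc u (\<lambda>i. c i + c' i)" using cx(4) fp(3) c'(1) by (simp add: lc_add algebra_simps)
    then have the: "(THE e. w - f = lc u e) = (\<lambda>i. c i + c' i)"
      using lc_inj[OF indep] by (intro the_equality) auto
    have "sum c UNIV \<le> sum (\<lambda>i. c i + c' i) UNIV"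
      using c'(2) by (intro sum_mono) auto
    also have "\<dots> \<in> B" unfolding B_def using the fp(1) by (metis (no_types, lifting) image_eqI)
    then have "sum (\<lambda>i. c i + c' i) UNIV \<le> Max B" using finB by simp
    finally show ?thesis using cx(1) by simp
  qed
  have "0 \<in> S" unfolding S_def W'_def using w
    by (intro CollectI exI[of _ "\<lambda>i. 0"] exI[of _ w]) (simp add: lc_zero)
  have finS: "finite S"
  proof -
    have "S \<subseteq> {0..Max B}"
    proof
      fix s assume "s \<in> S"
      moreover from this obtain c :: "'n \<Rightarrow> int" where "s = sum c UNIV" "\<forall>i. 0 \<le> c i" unfolding S_def by blast
      ultimately show "s \<in> {0..Max B}" using bnd by (simp add: sum_nonneg)
    qed
    then show ?thesis using finite_subset by blast
  qed
  have "Max S \<in> S" using finS \<open>0 \<in> S\<close> by (intro Max_in) auto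
  then obtain c0 x0 where c0: "Max S = sum c0 UNIV" "x0 \<in> W'" "\<forall>i. 0 \<le> c0 i" "w - x0 = lc u c0"
    unfolding S_def by blast
  have "x0 \<in> calW u W"
    unfolding calW_def
  proof (intro CollectI conjI)
    show "x0 \<in> W - scrW u W" using c0(2) unfolding W'_def by auto
    show "(\<lambda>p. x0 - p) ` pcone u \<inter> (W - scrW u W) = {x0}"
    proof (intro equalityI subsetI)
      fix y assume "y \<in> (\<lambda>p. x0 - p) ` pcone u \<inter> (W - scrW u W)"
      then obtain p where p: "y = x0 - lc u p" "\<forall>i. 0 \<le> p i" "y \<in> W'"
        unfolding pcone_lc W'_def by blast
      have "w - y = lc u (\<lambda>i. c0 i + p i)" using p(1) c0(4) by (simp add: lc_add algebra_simps)
      then have "sum (\<lambda>i. c0 i + p i) UNIV \<in> S" unfolding S_def using p(2,3) c0(3)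
        by (intro CollectI exI[of _ "\<lambda>i. c0 i + p i"] exI[of _ y]) auto
      then have "sum (\<lambda>i. c0 i + p i) UNIV \<le> sum c0 UNIV" using finS c0(1) by (metis Max_ge)
      then have "sum p UNIV \<le> 0" by (simp add: sum.distrib)
      then have "lc u p = 0" using pcone_sum_zero[OF indep p(2)] by simp
      then show "y \<in> {x0}" using p(1) by simp
    next
      fix y assume "y \<in> {x0}"
      then show "y \<in> (\<lambda>p. x0 - p) ` pcone u \<inter> (W - scrW u W)"
        using c0(2) pcone_0 unfolding W'_def by force
    qed
  qed
  moreover have "w - x0 \<in> pcone u" using c0(3,4) unfolding pcone_lc by blast
  ultimately show ?thesis by blast
qed



lemma zorn_min:
  assumes "F \<noteq> {}"
    and ch: "\<And>DD. DD \<subseteq> F \<Longrightarrow> DD \<noteq> {} \<Longrightarrow> (\<forall>XX\<in>DD. \<forall>ZZ\<in>DD. XX \<subseteq> ZZ \<or> ZZ \<subseteq> XX) \<Longrightarrow> \<Inter>DD \<in> F"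
  shows "\<exists>M\<in>F. \<forall>XX\<in>F. XX \<subseteq> M \<longrightarrow> XX = M"
proof -
  define G where "G = uminus ` F"
  have "\<forall>C\<in>chains G. \<exists>U\<in>G. \<forall>XX\<in>C. XX \<subseteq> U"
  proof
    fix C assume C: "C \<in> chains G"
    show "\<exists>U\<in>G. \<forall>XX\<in>C. XX \<subseteq> U"
    proof (cases "C = {}")
      case True
      then show ?thesis using assms(1) unfolding G_def by auto
    next
      case False
      define DD where "DD = uminus ` C"
      have "DD \<subseteq> F" using C unfolding DD_def G_def chains_def by auto
      moreover have "DD \<noteq> {}" using False unfolding DD_def by auto
      moreover have "\<forall>XX\<in>DD. \<forall>ZZ\<in>DD. XX \<subseteq> ZZ \<or> ZZ \<subseteq> XX"
        using C unfolding DD_def chains_def chain_subset_def by auto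
      ultimately have "\<Inter>DD \<in> F" by (rule ch)
      then have "- \<Inter>DD \<in> G" unfolding G_def by auto
      moreover have "\<forall>XX\<in>C. XX \<subseteq> - \<Inter>DD" unfolding DD_def by auto
      ultimately show ?thesis by blast
    qed
  qed
  from Zorn_Lemma2[OF this] obtain M' where M': "M' \<in> G" "\<forall>XX\<in>G. M' \<subseteq> XX \<longrightarrow> XX = M'" by blast
  have "- M' \<in> F" using M'(1) unfolding G_def by auto
  moreover have "\<forall>XX\<in>F. XX \<subseteq> - M' \<longrightarrow> XX = - M'"
  proof (intro ballI impI)
    fix XX assume "XX \<in> F" "XX \<subseteq> - M'"
    then have "- XX \<in> G" "M' \<subseteq> - XX" unfolding G_def by auto
    then have "- XX = M'" using M'(2) by blast
    then show "XX = - M'" by auto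
  qed
  ultimately show ?thesis by blast
qed

lemma shift_pcone:
  assumes "finite E" "E \<subseteq> latt u"
  shows "\<exists>q\<in>pcone u. \<forall>e\<in>E. q + e \<in> pcone u"
  using assms
proof (induction E rule: finite_induct)
  case empty
  then show ?case using pcone_0 by blast
next
  case (insert e E)
  then obtain q where q: "q \<in> pcone u" "\<forall>e\<in>E. q + e \<in> pcone u" by auto
  obtain a where a: "e = lc u a" using insert(4) unfolding latt_lc by auto
  define qe where "qe = lc u (\<lambda>i. \<bar>a i\<bar>)"
  have qe: "qe \<in> pcone u" unfolding qe_def pcone_lc by auto
  have "qe + e = lc u (\<lambda>i. \<bar>a i\<bar> + a i)" unfolding qe_def a by (simp add: lc_add)
  then have qee: "qe + e \<in> pcone u" unfolding pcone_lc by fastforce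
  have "q + qe \<in> pcone u" using q(1) qe by (rule pcone_add)
  moreover have "q + qe + e \<in> pcone u" using pcone_add[OF q(1) qee] by (simp add: add.assoc)
  moreover have "\<forall>e'\<in>E. q + qe + e' \<in> pcone u"
    using q(2) pcone_add[OF _ qe] by (metis add.assoc add.commute)
  ultimately show ?case by blast
qed

lemma finite_scrW:
  assumes "eventually_periodic u W" shows "finite (scrW u W)"
  using assms unfolding eventually_periodic_def scrW_def by blast

lemma calW_up:
  assumes "c \<in> calW u W" "p \<in> pcone u" shows "c + p \<in> W"
  using assms unfolding calW_def scrW_def by blast

lemma main_constr:
  fixes u :: "'n::finite \<Rightarrow> int ^ 'n"
  assumes indep: "lin_indep_Z u" and evp: "eventually_periodic u W"
    and K1: "\<forall>x. \<exists>k\<in>Kb. \<exists>t \<in> calW u W \<union> scrW1 u W. x - k - t \<in> latt u"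
    and K2: "\<forall>k\<in>Kb. \<exists>s\<in>scrW1 u W. (\<forall>k'\<in>Kb. \<forall>c\<in>calW u W. k + s - k' - c \<notin> latt u)
               \<and> (\<forall>k'\<in>Kb. \<forall>s'\<in>scrW1 u W. k + s - k' - s' \<in> latt u \<longrightarrow> k - k' \<in> latt u)"
  shows "\<exists>M. is_minimal_complement M W"
proof -
  define A where "A = scrW1 u W"
  have AW: "A \<subseteq> W" unfolding A_def scrW1_def scrW_def by auto
  have finA: "finite A" using finite_scrW[OF evp] unfolding A_def scrW1_def
    by (rule finite_subset[rotated]) auto
  define C where "C = {x. \<exists>k\<in>Kb. x - k \<in> latt u}"
  define Y where "Y = {y. \<forall>k\<in>Kb. \<forall>c\<in>calW u W. y - k - c \<notin> latt u}"
  define F where "F = {M. M \<subseteq> C \<and> (\<forall>y\<in>Y. \<exists>a\<in>A. y - a \<in> M)}"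
  have CF: "C \<in> F"
    unfolding F_def
  proof (intro CollectI conjI ballI subset_refl)
    fix y assume "y \<in> Y"
    obtain k t where kt: "k \<in> Kb" "t \<in> calW u W \<union> A" "y - k - t \<in> latt u"
      using K1 unfolding A_def by blast
    have "t \<notin> calW u W" using \<open>y \<in> Y\<close> kt(1,3) unfolding Y_def by blast
    then have "t \<in> A" using kt(2) by blast
    moreover have "y - t \<in> C" unfolding C_def using kt(1,3) by (auto simp: algebra_simps)
    ultimately show "\<exists>a\<in>A. y - a \<in> C" by blast
  qed
  have "\<exists>M\<in>F. \<forall>XX\<in>F. XX \<subseteq> M \<longrightarrow> XX = M"
  proof (rule zorn_min)
    show "F \<noteq> {}" using CF by blast
  next
    fix DD assume DD: "DD \<subseteq> F" "DD \<noteq> {}" "\<forall>XX\<in>DD. \<forall>ZZ\<in>DD. XX \<subseteq> ZZ \<or> ZZ \<subseteq> XX"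
    obtain DD0 where DD0: "DD0 \<in> DD" using DD(2) by blast
    show "\<Inter>DD \<in> F"
      unfolding F_def
    proof (intro CollectI conjI ballI)
      show "\<Inter>DD \<subseteq> C" using DD0 DD(1) unfolding F_def by blast
    next
      fix y assume y: "y \<in> Y"
      show "\<exists>a\<in>A. y - a \<in> \<Inter>DD"
      proof (rule ccontr)
        assume "\<not> (\<exists>a\<in>A. y - a \<in> \<Inter>DD)"
        then have na: "\<forall>a\<in>A. \<exists>XX\<in>DD. y - a \<notin> XX" by blast
        have "\<forall>A'. finite A' \<longrightarrow> A' \<subseteq> A \<longrightarrow> (\<exists>XX\<in>DD. \<forall>a\<in>A'. y - a \<notin> XX)"
        proof (intro allI impI)
          fix A' :: "(int ^ 'n) set" assume "finite A'" "A' \<subseteq> A"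
          then show "\<exists>XX\<in>DD. \<forall>a\<in>A'. y - a \<notin> XX"
          proof (induction A' rule: finite_induct)
            case empty
            then show ?case using DD0 by blast
          next
            case (insert a A')
            then obtain XX1 where XX1: "XX1 \<in> DD" "\<forall>b\<in>A'. y - b \<notin> XX1" by auto
            obtain XX2 where XX2: "XX2 \<in> DD" "y - a \<notin> XX2" using na insert(4) by auto
            show ?case
            proof (cases "XX1 \<subseteq> XX2")
              case True
              then show ?thesis using XX1 XX2 by blast
            next
              case False
              then have "XX2 \<subseteq> XX1" using DD(3) XX1(1) XX2(1) by blast
              then show ?thesis using XX1 XX2 by blast
            qed
          qed
        qed
        then obtain XX where XX: "XX \<in> DD" "\<forall>a\<in>A. y - a \<notin> XX" using finA by blast
        have "XX \<in> F" using XX(1) DD(1) by blast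
        then show False using XX(2) y unfolding F_def by blast
      qed
    qed
  qed
  then obtain M where MF: "M \<in> F" and Mmin: "\<forall>XX\<in>F. XX \<subseteq> M \<longrightarrow> XX = M" by blast
  have MC: "M \<subseteq> C" and MY: "\<forall>y\<in>Y. \<exists>a\<in>A. y - a \<in> M" using MF unfolding F_def by auto
  have cover: "\<exists>m\<in>M. \<exists>w\<in>W. x = m + w" for x
  proof (cases "x \<in> Y")
    case True
    then obtain a where "a \<in> A" "x - a \<in> M" using MY by blast
    then show ?thesis using AW by (intro bexI[of _ "x - a"] bexI[of _ a]) auto
  next
    case False
    then obtain k c where kc: "k \<in> Kb" "c \<in> calW u W" "x - k - c \<in> latt u"
      unfolding Y_def by blast
    obtain s where s: "s \<in> A" "\<forall>k'\<in>Kb. \<forall>c\<in>calW u W. k + s - k' - c \<notin> latt u"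
      "\<forall>k'\<in>Kb. \<forall>s'\<in>A. k + s - k' - s' \<in> latt u \<longrightarrow> k - k' \<in> latt u"
      using K2 kc(1) unfolding A_def by blast
    define E where "E = (\<lambda>a. a - s) ` {a\<in>A. a - s \<in> latt u}"
    have "finite E" unfolding E_def using finA by simp
    moreover have "E \<subseteq> latt u" unfolding E_def by auto
    ultimately obtain q where q: "q \<in> pcone u" "\<forall>e\<in>E. q + e \<in> pcone u"
      using shift_pcone by blast
    have ql: "q \<in> latt u" using q(1) pcone_latt by blast
    define y where "y = x - c + s - q"
    have "y \<in> Y"
      unfolding Y_def
    proof (intro CollectI ballI)
      fix k' c' assume kc': "k' \<in> Kb" "c' \<in> calW u W"
      show "y - k' - c' \<notin> latt u"
      proof
        assume "y - k' - c' \<in> latt u"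
        moreover have "y - k' - c' = (k + s - k' - c') + ((x - k - c) - q)"
          unfolding y_def by (simp add: algebra_simps)
        ultimately have "(k + s - k' - c') + ((x - k - c) - q) - ((x - k - c) - q) \<in> latt u"
          using latt_diff[OF _ latt_diff[OF kc(3) ql]] by metis
        then have "k + s - k' - c' \<in> latt u" by (simp only: add_diff_cancel)
        then show False using s(2) kc' by blast
      qed
    qed
    then obtain a where a: "a \<in> A" "y - a \<in> M" using MY by blast
    then obtain k'' where k'': "k'' \<in> Kb" "y - a - k'' \<in> latt u" using MC unfolding C_def by blast
    have "k + s - k'' - a = (y - a - k'') - ((x - k - c) - q)"
      unfolding y_def by (simp add: algebra_simps)
    moreover have "(y - a - k'') - ((x - k - c) - q) \<in> latt u" using latt_diff[OF k''(2) latt_diff[OF kc(3) ql]] .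
    ultimately have "k + s - k'' - a \<in> latt u" by (simp only:)
    then have kk: "k - k'' \<in> latt u" using s(3) k''(1) a(1) by blast
    have "a - s = (k - k'') - (k + s - k'' - a)" by (simp add: algebra_simps)
    moreover have "(k - k'') - (k + s - k'' - a) \<in> latt u" using latt_diff[OF kk \<open>k + s - k'' - a \<in> latt u\<close>] .
    ultimately have "a - s \<in> latt u" by (simp only:)
    then have "a - s \<in> E" unfolding E_def using a(1) by blast
    then have "q + (a - s) \<in> pcone u" using q(2) by blast
    then have "c + (q + (a - s)) \<in> W" using calW_up[OF kc(2)] by blast
    moreover have "x = (y - a) + (c + (q + (a - s)))" unfolding y_def by (simp add: algebra_simps)
    ultimately show ?thesis using a(2) by blast
  qed
  have compl: "is_complement M W"
    unfolding is_complement_def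
  proof
    show "{m + w |m w. m \<in> M \<and> w \<in> W} = UNIV" using cover by blast
    then show "M \<noteq> {}" by blast
  qed
  have "\<not> is_complement M' W" if "M' \<subset> M" for M'
  proof
    assume cM': "is_complement M' W"
    obtain m where m: "m \<in> M" "m \<notin> M'" using \<open>M' \<subset> M\<close> by blast
    have "M - {m} \<notin> F"
    proof
      assume "M - {m} \<in> F"
      then have "M - {m} = M" using Mmin by blast
      then show False using m(1) by blast
    qed
    moreover have "M - {m} \<subseteq> C" using MC by blast
    ultimately obtain y where y: "y \<in> Y" "\<forall>a\<in>A. y - a \<notin> M - {m}" unfolding F_def by blast
    have "y \<in> {m + w |m w. m \<in> M' \<and> w \<in> W}" using cM' unfolding is_complement_def by blast
    then obtain m' w where mw: "y = m' + w" "m' \<in> M'" "w \<in> W" by blast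
    have m'M: "m' \<in> M - {m}" using mw(2) m(2) \<open>M' \<subset> M\<close> by blast
    show False
    proof (cases "w \<in> A")
      case True
      then show False using y(2) mw(1) m'M by force
    next
      case False
      have "\<exists>c\<in>calW u W. w - c \<in> latt u"
      proof (cases "w \<in> scrW u W")
        case True
        then show ?thesis using False unfolding A_def scrW1_def by blast
      next
        case False
        then show ?thesis using min_calW[OF indep evp mw(3)] pcone_latt by blast
      qed
      then obtain c where c: "c \<in> calW u W" "w - c \<in> latt u" by blast
      obtain k where k: "k \<in> Kb" "m' - k \<in> latt u" using m'M MC unfolding C_def by blast
      have "y - k - c = (m' - k) + (w - c)" using mw(1) by (simp add: algebra_simps)
      moreover have "(m' - k) + (w - c) \<in> latt u" using latt_add[OF k(2) c(2)] .
      ultimately have "y - k - c \<in> latt u" by (simp only:)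
      then show False using y(1) k(1) c(1) unfolding Y_def by blast
    qed
  qed
  then show ?thesis using compl unfolding is_minimal_complement_def by blast
qed



lemma Zgrp_simps [simp]: "carrier Zgrp = UNIV" "x \<otimes>\<^bsub>Zgrp\<^esub> y = x + y" "\<one>\<^bsub>Zgrp\<^esub> = 0"
  by (simp_all add: Zgrp_def)

lemma Zgrp_comm_group: "comm_group (Zgrp :: (int ^ 'n) monoid)"
  by (rule comm_groupI) (auto simp: add.assoc add.commute intro: exI[of _ "- x" for x])

lemma Zgrp_group: "group (Zgrp :: (int ^ 'n) monoid)"
  using Zgrp_comm_group comm_group.axioms(2) by blast

lemma Zgrp_inv [simp]: "inv\<^bsub>Zgrp\<^esub> (x :: int ^ 'n) = - x"
  by (rule group.inv_equality[OF Zgrp_group]) auto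

lemma latt_subgroup: "subgroup (latt u) Zgrp"
  by (rule group.subgroupI[OF Zgrp_group]) (auto intro: latt_0 latt_add latt_neg)

lemma latt_normal: "latt u \<lhd> Zgrp"
  by (rule comm_group.subgroup_imp_normal[OF Zgrp_comm_group latt_subgroup])

lemma Qgrp_group: "group (Qgrp u)"
  unfolding Qgrp_def by (rule normal.factorgroup_is_group[OF latt_normal])

lemma qmap_alt: "qmap u x = (\<lambda>l. l + x) ` latt u"
  by (auto simp: qmap_def r_coset_def)

lemma Qgrp_carrier: "carrier (Qgrp u) = range (qmap u)"
  by (auto simp: Qgrp_def FactGroup_def RCOSETS_def qmap_def)

lemma Qgrp_one: "\<one>\<^bsub>Qgrp u\<^esub> = latt u"
  by (simp add: Qgrp_def FactGroup_def)

lemma Qgrp_mult: "P1 \<otimes>\<^bsub>Qgrp u\<^esub> P2 = {a + b | a b. a \<in> P1 \<and> b \<in> P2}"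
  by (auto simp: Qgrp_def FactGroup_def set_mult_def)

lemma qmap_mem: "y \<in> qmap u x \<longleftrightarrow> y - x \<in> latt u"
  unfolding qmap_alt by (auto intro: image_eqI[of _ _ "y - x"])

lemma qmap_self: "x \<in> qmap u x"
  by (simp add: qmap_mem latt_0)

lemma qmap_eq: "qmap u x = qmap u y \<longleftrightarrow> x - y \<in> latt u"
proof
  assume "qmap u x = qmap u y"
  then show "x - y \<in> latt u" using qmap_self[of x u] qmap_mem by metis
next
  assume h: "x - y \<in> latt u"
  show "qmap u x = qmap u y"
  proof (intro equalityI subsetI)
    fix z assume "z \<in> qmap u x"
    then have "z - x \<in> latt u" by (simp add: qmap_mem)
    from latt_add[OF this h] show "z \<in> qmap u y" by (simp add: qmap_mem)
  next
    fix z assume "z \<in> qmap u y"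
    then have "z - y \<in> latt u" by (simp add: qmap_mem)
    from latt_diff[OF this h] show "z \<in> qmap u x" by (simp add: qmap_mem)
  qed
qed

lemma qmap_0: "qmap u 0 = latt u"
  by (auto simp: qmap_mem)

lemma qmap_mult: "qmap u a \<otimes>\<^bsub>Qgrp u\<^esub> qmap u b = qmap u (a + b)"
proof (unfold Qgrp_mult, intro equalityI subsetI)
  fix z assume "z \<in> {x + y |x y. x \<in> qmap u a \<and> y \<in> qmap u b}"
  then obtain x y where "z = x + y" "x - a \<in> latt u" "y - b \<in> latt u" by (auto simp: qmap_mem)
  moreover have "(x - a) + (y - b) = (x + y) - (a + b)" by (simp add: algebra_simps)
  ultimately show "z \<in> qmap u (a + b)" using latt_add by (metis qmap_mem)
next
  fix z assume "z \<in> qmap u (a + b)"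
  then have "z - b - a \<in> latt u" by (simp add: qmap_mem algebra_simps)
  then have "z - b \<in> qmap u a" "b \<in> qmap u b" by (simp_all add: qmap_mem latt_0)
  then show "z \<in> {x + y |x y. x \<in> qmap u a \<and> y \<in> qmap u b}" by force
qed

lemma qmap_inv: "inv\<^bsub>Qgrp u\<^esub> (qmap u y) = qmap u (- y)"
  by (rule group.inv_equality[OF Qgrp_group]) (auto simp: qmap_mult Qgrp_carrier Qgrp_one qmap_0)

lemma order2:
  assumes "\<forall>x \<in> carrier (Qgrp u). x \<noteq> \<one>\<^bsub>Qgrp u\<^esub> \<longrightarrow> group.ord (Qgrp u) x = 2"
  shows "y + y \<in> latt u"
proof (cases "qmap u y = \<one>\<^bsub>Qgrp u\<^esub>")
  case True
  then have "y \<in> latt u" by (metis Qgrp_one qmap_self)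
  then show ?thesis using latt_add by blast
next
  case False
  have c: "qmap u y \<in> carrier (Qgrp u)" by (simp add: Qgrp_carrier)
  then have "group.ord (Qgrp u) (qmap u y) = 2" using assms False by blast
  then have "qmap u y [^]\<^bsub>Qgrp u\<^esub> (2::nat) = \<one>\<^bsub>Qgrp u\<^esub>"
    using group.pow_ord_eq_1[OF Qgrp_group c] by simp
  moreover have "qmap u y [^]\<^bsub>Qgrp u\<^esub> (2::nat) = qmap u y \<otimes>\<^bsub>Qgrp u\<^esub> qmap u y"
    using monoid.nat_pow_Suc[OF group.is_monoid[OF Qgrp_group]]
      monoid.nat_pow_0[OF group.is_monoid[OF Qgrp_group]]
      monoid.l_one[OF group.is_monoid[OF Qgrp_group] c]
    by (simp add: numeral_2_eq_2)
  ultimately have "qmap u (y + y) = qmap u 0" by (simp add: qmap_mult Qgrp_one qmap_0)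
  then show ?thesis by (simp add: qmap_eq)
qed



lemma latt_cong: "b = a \<Longrightarrow> a \<in> latt u \<Longrightarrow> b \<in> latt u" by simp

lemma scrW1_not: "s \<in> scrW1 u W \<Longrightarrow> c \<in> calW u W \<Longrightarrow> s - c \<notin> latt u"
  unfolding scrW1_def by blast

lemma case1_Z:
  fixes u :: "'n::finite \<Rightarrow> int ^ 'n"
  assumes indep: "lin_indep_Z u" and evp: "eventually_periodic u W" and ne: "scrW1 u W \<noteq> {}"
    and H0: "0 \<in> Hb" and Hd: "\<And>a b. a \<in> Hb \<Longrightarrow> b \<in> Hb \<Longrightarrow> a - b \<in> Hb" and HL: "latt u \<subseteq> Hb"
    and G1: "\<forall>t \<in> calW u W \<union> scrW1 u W. t - g0 \<in> Hb"
    and G2: "\<forall>h\<in>Hb. \<exists>t\<in>calW u W \<union> scrW1 u W. t - g0 - h \<in> latt u"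
  shows "\<exists>M. is_minimal_complement M W"
proof -
  have Ha: "a + b \<in> Hb" if "a \<in> Hb" "b \<in> Hb" for a b
    using Hd[OF that(1) Hd[OF H0 that(2)]] by simp
  have Hcong: "b \<in> Hb" if "b = a" "a \<in> Hb" for a b using that by simp
  define rep where "rep x = (SOME k. k - x \<in> Hb)" for x
  have rep_in: "rep x - x \<in> Hb" for x unfolding rep_def by (rule someI[of _ x]) (simp add: H0)
  have rep_uniq: "rep a = rep b" if "rep a - rep b \<in> Hb" for a b
  proof -
    have ab: "a - b \<in> Hb"
      by (rule Hcong[OF _ Ha[OF Hd[OF that rep_in[of a]] rep_in[of b]]]) (simp add: algebra_simps)
    have "(k - a \<in> Hb) = (k - b \<in> Hb)" for k
    proof
      assume "k - a \<in> Hb" show "k - b \<in> Hb"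
        by (rule Hcong[OF _ Ha[OF \<open>k - a \<in> Hb\<close> ab]]) (simp add: algebra_simps)
    next
      assume "k - b \<in> Hb" show "k - a \<in> Hb"
        by (rule Hcong[OF _ Hd[OF \<open>k - b \<in> Hb\<close> ab]]) (simp add: algebra_simps)
    qed
    then show ?thesis unfolding rep_def by simp
  qed
  show ?thesis
  proof (rule main_constr[OF indep evp, of "range rep"])
    show "\<forall>x. \<exists>k\<in>range rep. \<exists>t\<in>calW u W \<union> scrW1 u W. x - k - t \<in> latt u"
    proof
      fix x
      define k where "k = rep (x - g0)"
      have "x - g0 - k \<in> Hb"
        by (rule Hcong[OF _ Hd[OF H0 rep_in[of "x - g0"]]]) (simp add: k_def)
      then obtain t where t: "t \<in> calW u W \<union> scrW1 u W" "t - g0 - (x - g0 - k) \<in> latt u" using G2 by blast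
      have "x - k - t \<in> latt u"
        by (rule latt_cong[OF _ latt_neg[OF t(2)]]) (simp add: algebra_simps)
      then show "\<exists>k\<in>range rep. \<exists>t\<in>calW u W \<union> scrW1 u W. x - k - t \<in> latt u"
        using t(1) unfolding k_def by blast
    qed
  next
    show "\<forall>k\<in>range rep. \<exists>s\<in>scrW1 u W. (\<forall>k'\<in>range rep. \<forall>c\<in>calW u W. k + s - k' - c \<notin> latt u)
               \<and> (\<forall>k'\<in>range rep. \<forall>s'\<in>scrW1 u W. k + s - k' - s' \<in> latt u \<longrightarrow> k - k' \<in> latt u)"
    proof
      fix k assume "k \<in> range rep"
      then obtain a where a: "k = rep a" by blast
      obtain s where s: "s \<in> scrW1 u W" using ne by blast
      have sg: "s - g0 \<in> Hb" using G1 s by blast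
      have P1: "\<forall>k'\<in>range rep. \<forall>c\<in>calW u W. k + s - k' - c \<notin> latt u"
      proof (intro ballI notI)
        fix k' c assume k': "k' \<in> range rep" and c: "c \<in> calW u W" and m: "k + s - k' - c \<in> latt u"
        obtain b where b: "k' = rep b" using k' by blast
        have cg: "c - g0 \<in> Hb" using G1 c by blast
        have "k - k' \<in> Hb"
          by (rule Hcong[OF _ Ha[OF Hd[OF subsetD[OF HL m] sg] cg]]) (simp add: algebra_simps)
        then have "k = k'" using rep_uniq a b by blast
        then have "s - c \<in> latt u" using m by simp
        then show False using scrW1_not[OF s c] by blast
      qed
      have P2: "\<forall>k'\<in>range rep. \<forall>s'\<in>scrW1 u W. k + s - k' - s' \<in> latt u \<longrightarrow> k - k' \<in> latt u"
      proof (intro ballI impI)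
        fix k' s' assume k': "k' \<in> range rep" and s': "s' \<in> scrW1 u W" and m: "k + s - k' - s' \<in> latt u"
        obtain b where b: "k' = rep b" using k' by blast
        have cg: "s' - g0 \<in> Hb" using G1 s' by blast
        have "k - k' \<in> Hb"
          by (rule Hcong[OF _ Ha[OF Hd[OF subsetD[OF HL m] sg] cg]]) (simp add: algebra_simps)
        then have "k = k'" using rep_uniq a b by blast
        then show "k - k' \<in> latt u" using latt_0 by simp
      qed
      show "\<exists>s\<in>scrW1 u W. (\<forall>k'\<in>range rep. \<forall>c\<in>calW u W. k + s - k' - c \<notin> latt u)
               \<and> (\<forall>k'\<in>range rep. \<forall>s'\<in>scrW1 u W. k + s - k' - s' \<in> latt u \<longrightarrow> k - k' \<in> latt u)"
        using s P1 P2 by blast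
    qed
  qed
qed



lemma disj_right: "P \<or> Q \<Longrightarrow> \<not> P \<Longrightarrow> Q" by blast

theorem proposition4p21:
  fixes u :: "'n::finite \<Rightarrow> int ^ 'n" and W :: "(int ^ 'n) set"
  assumes indep: "lin_indep_Z u"
    and evp: "eventually_periodic u W"
    and ne: "scrW1 u W \<noteq> {}"
    and cond: "(\<exists>g \<in> carrier (Qgrp u). \<exists>H. subgroup H (Qgrp u) \<and>
                   qmap u ` (calW u W \<union> scrW1 u W) = (\<lambda>h. g \<otimes>\<^bsub>Qgrp u\<^esub> h) ` H)
            \<or> ((\<forall>x \<in> carrier (Qgrp u). x \<noteq> \<one>\<^bsub>Qgrp u\<^esub> \<longrightarrow> group.ord (Qgrp u) x = 2)
               \<and> ((\<exists>a. qmap u ` scrW1 u W = {a}) \<and> (\<exists>b. qmap u ` calW u W = {b})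
                  \<or> (\<exists>c. carrier (Qgrp u) - qmap u ` (scrW1 u W \<union> calW u W) = {c})))"
  shows "\<exists>M. is_minimal_complement M W"
proof -
  let ?T = "calW u W \<union> scrW1 u W"
  let ?Q = "Qgrp u"
  show ?thesis
  proof (cases "\<exists>g \<in> carrier ?Q. \<exists>H. subgroup H ?Q \<and> qmap u ` ?T = (\<lambda>h. g \<otimes>\<^bsub>?Q\<^esub> h) ` H")
    case True
    then obtain g H where g: "g \<in> carrier ?Q" and H: "subgroup H ?Q"
      and img: "qmap u ` ?T = (\<lambda>h. g \<otimes>\<^bsub>?Q\<^esub> h) ` H" by blast
    obtain g0 where g0: "g = qmap u g0" using g by (auto simp: Qgrp_carrier)
    have Hc: "P \<in> H \<Longrightarrow> \<exists>p. P = qmap u p" for P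
      using subgroup.subset[OF H] by (auto simp: Qgrp_carrier)
    define Hb where "Hb = \<Union>H"
    have LH: "latt u \<in> H" using subgroup.one_closed[OF H] by (simp add: Qgrp_one)
    show ?thesis
    proof (rule case1_Z[OF indep evp ne, of Hb g0])
      show "0 \<in> Hb" unfolding Hb_def using LH latt_0 by blast
      show "latt u \<subseteq> Hb" unfolding Hb_def using LH by blast
    next
      fix a b assume "a \<in> Hb" "b \<in> Hb"
      then obtain P1 P2 where P: "a \<in> P1" "P1 \<in> H" "b \<in> P2" "P2 \<in> H" unfolding Hb_def by blast
      obtain b2 where b2: "P2 = qmap u b2" using Hc[OF P(4)] by blast
      have "inv\<^bsub>?Q\<^esub> P2 \<in> H" using subgroup.m_inv_closed[OF H P(4)] .
      then have i: "qmap u (- b2) \<in> H" by (simp add: b2 qmap_inv)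
      then have "P1 \<otimes>\<^bsub>?Q\<^esub> qmap u (- b2) \<in> H" using subgroup.m_closed[OF H P(2)] by blast
      moreover have "- b \<in> qmap u (- b2)"
      proof -
        have "b - b2 \<in> latt u" using P(3) b2 by (simp add: qmap_mem)
        then have bb: "b - b2 \<in> latt u" .
        have "- b - - b2 \<in> latt u" by (rule latt_cong[OF _ latt_neg[OF bb]]) simp
        then show ?thesis by (simp add: qmap_mem)
      qed
      then have "a - b \<in> P1 \<otimes>\<^bsub>?Q\<^esub> qmap u (- b2)" unfolding Qgrp_mult using P(1)
        by (intro CollectI exI[of _ a] exI[of _ "- b"]) simp
      ultimately show "a - b \<in> Hb" unfolding Hb_def by blast
    next
      show "\<forall>t\<in>?T. t - g0 \<in> Hb"
      proof
        fix t assume t: "t \<in> ?T"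
        then have "qmap u t \<in> (\<lambda>h. g \<otimes>\<^bsub>?Q\<^esub> h) ` H" using img by blast
        then obtain P where P: "P \<in> H" "qmap u t = g \<otimes>\<^bsub>?Q\<^esub> P" by blast
        obtain h0 where h0: "P = qmap u h0" using Hc[OF P(1)] by blast
        have "qmap u t = qmap u (g0 + h0)" using P(2) by (simp add: g0 h0 qmap_mult)
        then have tg: "t - (g0 + h0) \<in> latt u" by (simp add: qmap_eq)
        have "t - g0 - h0 \<in> latt u" by (rule latt_cong[OF _ tg]) (simp add: algebra_simps)
        then have "t - g0 \<in> P" unfolding h0 qmap_mem .
        then show "t - g0 \<in> Hb" unfolding Hb_def using P(1) by blast
      qed
    next
      show "\<forall>h\<in>Hb. \<exists>t\<in>?T. t - g0 - h \<in> latt u"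
      proof
        fix hv assume "hv \<in> Hb"
        then obtain P where P: "hv \<in> P" "P \<in> H" unfolding Hb_def by blast
        obtain h0 where h0: "P = qmap u h0" using Hc[OF P(2)] by blast
        have hh: "hv - h0 \<in> latt u" using P(1) h0 by (simp add: qmap_mem)
        have "g \<otimes>\<^bsub>?Q\<^esub> P \<in> qmap u ` ?T" using img P(2) by blast
        then obtain t where t: "t \<in> ?T" "qmap u t = qmap u (g0 + h0)" by (auto simp: g0 h0 qmap_mult)
        then have tg: "t - (g0 + h0) \<in> latt u" by (simp add: qmap_eq)
        have "t - g0 - hv \<in> latt u"
          by (rule latt_cong[OF _ latt_diff[OF tg hh]]) (simp add: algebra_simps)
        then show "\<exists>t\<in>?T. t - g0 - hv \<in> latt u" using t(1) by blast
      qed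
    qed
  next
    case False
    have ord2: "\<forall>x \<in> carrier ?Q. x \<noteq> \<one>\<^bsub>?Q\<^esub> \<longrightarrow> group.ord ?Q x = 2"
      by (rule conjunct1[OF disj_right[OF cond False]])
    have alt: "(\<exists>a. qmap u ` scrW1 u W = {a}) \<and> (\<exists>b. qmap u ` calW u W = {b})
                  \<or> (\<exists>c. carrier ?Q - qmap u ` (scrW1 u W \<union> calW u W) = {c})"
      by (rule conjunct2[OF disj_right[OF cond False]])
    have two: "y + y \<in> latt u" for y using order2[OF ord2] .
    have "\<exists>x. x \<in> scrW1 u W" using iffD2[OF ex_in_conv ne] .
    then obtain s0 where s0: "s0 \<in> scrW1 u W" ..
    show ?thesis
    proof (cases "(\<exists>a. qmap u ` scrW1 u W = {a}) \<and> (\<exists>b. qmap u ` calW u W = {b})")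
      case True
      from True have "\<exists>a. qmap u ` scrW1 u W = {a}" by (rule conjunct1)
      then obtain a where a: "qmap u ` scrW1 u W = {a}" ..
      from True have "\<exists>b. qmap u ` calW u W = {b}" by (rule conjunct2)
      then obtain b where b: "qmap u ` calW u W = {b}" ..
      have "b \<in> qmap u ` calW u W" using b by simp
      then obtain c0 where "b = qmap u c0" and c0: "c0 \<in> calW u W" by (rule imageE)
      have sS: "s - s0 \<in> latt u" if "s \<in> scrW1 u W" for s
      proof -
        have "qmap u s \<in> {a}" "qmap u s0 \<in> {a}" using a that s0 by (blast, blast)
        then show ?thesis by (simp add: qmap_eq[symmetric])
      qed
      have cC: "c - c0 \<in> latt u" if "c \<in> calW u W" for c
      proof -
        have "qmap u c \<in> {b}" "qmap u c0 \<in> {b}" using b that c0 by (blast, blast)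
        then show ?thesis by (simp add: qmap_eq[symmetric])
      qed
      define d where "d = s0 - c0"
      define Hb where "Hb = {h. h \<in> latt u \<or> h - d \<in> latt u}"
      show ?thesis
      proof (rule case1_Z[OF indep evp ne, of Hb c0])
        show "0 \<in> Hb" unfolding Hb_def using latt_0 by blast
        show "latt u \<subseteq> Hb" unfolding Hb_def by blast
      next
        fix x y assume "x \<in> Hb" "y \<in> Hb"
        then consider "x \<in> latt u" "y \<in> latt u" | "x \<in> latt u" "y - d \<in> latt u"
          | "x - d \<in> latt u" "y \<in> latt u" | "x - d \<in> latt u" "y - d \<in> latt u"
          unfolding Hb_def by blast
        then show "x - y \<in> Hb"
        proof cases
          case 1 then show ?thesis unfolding Hb_def using latt_diff by blast
        next
          case 2
          have "x - y - d \<in> latt u"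
            by (rule latt_cong[OF _ latt_diff[OF latt_diff[OF 2] two[of d]]]) (simp add: algebra_simps)
          then show ?thesis unfolding Hb_def by blast
        next
          case 3
          have "x - y - d \<in> latt u"
            by (rule latt_cong[OF _ latt_diff[OF 3]]) (simp add: algebra_simps)
          then show ?thesis unfolding Hb_def by blast
        next
          case 4
          have "x - y \<in> latt u"
            by (rule latt_cong[OF _ latt_diff[OF 4]]) (simp add: algebra_simps)
          then show ?thesis unfolding Hb_def by blast
        qed
      next
        show "\<forall>t\<in>?T. t - c0 \<in> Hb"
        proof
          fix t assume "t \<in> ?T"
          then show "t - c0 \<in> Hb"
          proof
            assume "t \<in> calW u W" then show ?thesis using cC unfolding Hb_def by blast
          next
            assume ts: "t \<in> scrW1 u W"
            have "t - c0 - d \<in> latt u"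
              by (rule latt_cong[OF _ sS[OF ts]]) (simp add: d_def algebra_simps)
            then show ?thesis unfolding Hb_def by blast
          qed
        qed
      next
        show "\<forall>h\<in>Hb. \<exists>t\<in>?T. t - c0 - h \<in> latt u"
        proof
          fix h assume "h \<in> Hb"
          then consider "h \<in> latt u" | "h - d \<in> latt u" unfolding Hb_def by blast
          then show "\<exists>t\<in>?T. t - c0 - h \<in> latt u"
          proof cases
            case 1
            have "c0 - c0 - h \<in> latt u" by (rule latt_cong[OF _ latt_neg[OF 1]]) simp
            then show ?thesis using c0 by blast
          next
            case 2
            have "s0 - c0 - h \<in> latt u"
              by (rule latt_cong[OF _ latt_neg[OF 2]]) (simp add: d_def algebra_simps)
            then show ?thesis using s0 by blast
          qed
        qed
      qed
    next
      case False
      have "\<exists>c. carrier ?Q - qmap u ` (scrW1 u W \<union> calW u W) = {c}"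
        by (rule disj_right[OF alt False])
      then obtain c where c: "carrier ?Q - qmap u ` (scrW1 u W \<union> calW u W) = {c}" ..
      have cD: "c \<in> carrier ?Q - qmap u ` (scrW1 u W \<union> calW u W)" using c by simp
      then have "c \<in> carrier ?Q" by (rule DiffD1)
      then obtain c0 where c0: "c = qmap u c0" by (auto simp: Qgrp_carrier)
      have N: "t - c0 \<notin> latt u" if "t \<in> ?T" for t
      proof
        assume "t - c0 \<in> latt u"
        then have qt: "qmap u t = c" by (simp add: c0 qmap_eq)
        have "t \<in> scrW1 u W \<union> calW u W" using that by blast
        then have "qmap u t \<in> qmap u ` (scrW1 u W \<union> calW u W)" by (rule imageI)
        then show False using cD qt by simp
      qed
      have Pp: "\<exists>t\<in>?T. x - t \<in> latt u" if "x - c0 \<notin> latt u" for x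
      proof -
        have "qmap u x \<noteq> c" using that by (simp add: c0 qmap_eq)
        moreover have "qmap u x \<in> carrier ?Q" by (simp add: Qgrp_carrier)
        ultimately have "qmap u x \<in> qmap u ` (scrW1 u W \<union> calW u W)" using c by (metis DiffI singletonD)
        then obtain t where "qmap u x = qmap u t" "t \<in> scrW1 u W \<union> calW u W" by (rule imageE)
        then have "x - t \<in> latt u" "t \<in> ?T" by (simp_all add: qmap_eq) blast
        then show ?thesis by blast
      qed
      define d0 where "d0 = s0 + c0"
      show ?thesis
      proof (rule main_constr[OF indep evp, of "{0, d0}"])
        show "\<forall>x. \<exists>k\<in>{0, d0}. \<exists>t\<in>?T. x - k - t \<in> latt u"
        proof
          fix x
          show "\<exists>k\<in>{0, d0}. \<exists>t\<in>?T. x - k - t \<in> latt u"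
          proof (cases "x - c0 \<in> latt u")
            case True
            have "x - d0 - s0 \<in> latt u"
              by (rule latt_cong[OF _ latt_diff[OF True two[of s0]]]) (simp add: d0_def algebra_simps)
            then show ?thesis using s0 by blast
          next
            case False
            then obtain t where tT: "t \<in> ?T" "x - t \<in> latt u" using Pp by blast
            then have "x - 0 - t \<in> latt u" by simp
            moreover have "(0::int^'n) \<in> {0, d0}" by simp
            ultimately show ?thesis using tT(1) by blast
          qed
        qed
      next
        have A0: "(\<forall>k'\<in>{0, d0}. \<forall>c\<in>calW u W. 0 + s0 - k' - c \<notin> latt u)
               \<and> (\<forall>k'\<in>{0, d0}. \<forall>s'\<in>scrW1 u W. 0 + s0 - k' - s' \<in> latt u \<longrightarrow> 0 - k' \<in> latt u)"
        proof (intro conjI ballI impI notI)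
          fix k' c assume k': "k' \<in> {0, d0}" and c: "c \<in> calW u W" and m: "0 + s0 - k' - c \<in> latt u"
          show False
          proof (cases "k' = 0")
            case True
            then show False using m scrW1_not[OF s0 c] by simp
          next
            case False
            then have "k' = d0" using k' by blast
            then have "c - c0 \<in> latt u"
              using latt_cong[OF _ latt_add[OF m two[of c]], of "c - c0"] by (simp add: d0_def algebra_simps)
            then show False using N c by blast
          qed
        next
          fix k' s' assume k': "k' \<in> {0, d0}" and s': "s' \<in> scrW1 u W" and m: "0 + s0 - k' - s' \<in> latt u"
          show "0 - k' \<in> latt u"
          proof (cases "k' = 0")
            case True
            then show ?thesis using latt_0 by simp
          next
            case False
            then have "k' = d0" using k' by blast
            then have "s' - c0 \<in> latt u"
              using latt_cong[OF _ latt_add[OF m two[of s']], of "s' - c0"] by (simp add: d0_def algebra_simps)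
            then show ?thesis using N s' by blast
          qed
        qed
        have A1: "(\<forall>k'\<in>{0, d0}. \<forall>c\<in>calW u W. d0 + s0 - k' - c \<notin> latt u)
               \<and> (\<forall>k'\<in>{0, d0}. \<forall>s'\<in>scrW1 u W. d0 + s0 - k' - s' \<in> latt u \<longrightarrow> d0 - k' \<in> latt u)"
        proof (intro conjI ballI impI notI)
          fix k' c assume k': "k' \<in> {0, d0}" and c: "c \<in> calW u W" and m: "d0 + s0 - k' - c \<in> latt u"
          show False
          proof (cases "k' = d0")
            case True
            then show False using m scrW1_not[OF s0 c] by simp
          next
            case False
            then have "k' = 0" using k' by blast
            then have "c - c0 \<in> latt u"
              using latt_cong[OF _ latt_diff[OF two[of s0] m], of "c - c0"] by (simp add: d0_def algebra_simps)
            then show False using N c by blast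
          qed
        next
          fix k' s' assume k': "k' \<in> {0, d0}" and s': "s' \<in> scrW1 u W" and m: "d0 + s0 - k' - s' \<in> latt u"
          show "d0 - k' \<in> latt u"
          proof (cases "k' = d0")
            case True
            then show ?thesis using latt_0 by simp
          next
            case False
            then have "k' = 0" using k' by blast
            then have "s' - c0 \<in> latt u"
              using latt_cong[OF _ latt_diff[OF two[of s0] m], of "s' - c0"] by (simp add: d0_def algebra_simps)
            then show ?thesis using N s' by blast
          qed
        qed
        show "\<forall>k\<in>{0, d0}. \<exists>s\<in>scrW1 u W. (\<forall>k'\<in>{0, d0}. \<forall>c\<in>calW u W. k + s - k' - c \<notin> latt u)
               \<and> (\<forall>k'\<in>{0, d0}. \<forall>s'\<in>scrW1 u W. k + s - k' - s' \<in> latt u \<longrightarrow> k - k' \<in> latt u)"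
        proof
          fix k assume "k \<in> {0, d0}"
          then consider "k = 0" | "k = d0" by blast
          then show "\<exists>s\<in>scrW1 u W. (\<forall>k'\<in>{0, d0}. \<forall>c\<in>calW u W. k + s - k' - c \<notin> latt u)
               \<and> (\<forall>k'\<in>{0, d0}. \<forall>s'\<in>scrW1 u W. k + s - k' - s' \<in> latt u \<longrightarrow> k - k' \<in> latt u)"
          proof cases
            case 1 show ?thesis unfolding 1 using A0 s0 by blast
          next
            case 2 show ?thesis unfolding 2 using A1 s0 by blast
          qed
        qed
      qed
    qed
  qed
qed


end
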